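(* Let $m,d,n\ge1$, $p,q,\lambda>0$, $g(\alpha)=\|\alpha/\lambda\|_p^q$, and let $\mathfrak{D}$ be the set of matrices in $\mathbb{R}^{m\times d}$ with unit $\ell_2$-norm columns. Let $\mathbb{P}$ be a probability distribution on $\mathbb{R}^m$ with $\mathbb{P}(\|x\|_2\le1)=1$, and let $X=[x_1,\dots,x_n]$ consist of $n$ i.i.d. samples from $\mathbb{P}$. Let $0\le t<\infty$ and $L>\lambda\, d^{(1-1/p)_+}(1/2)^{1/q}$. Set $$\beta=\frac{md}{8}\max\{\log(6\sqrt8\,L),1\},\qquad \eta(n,m,d,L)=2\sqrt{\frac{\beta\log n}{n}}+\sqrt{\frac{\beta+t/\sqrt8}{n}}.$$ Then with probability at least $1-2e^{-t}$, $$\sup_{D\in\mathfrak{D}}\big|F_X(D)-\mathbb{E}_{x\sim\mathbb{P}}f_x(D)\big|\le\eta(n,m,d,L).$$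
   Context: For $x\in\mathbb{R}^m$ and $D\in\mathbb{R}^{m\times d}$, $f_x(D)=\inf_{\alpha\in\mathbb{R}^d}\tfrac12\|x-D\alpha\|_2^2+g(\alpha)$, and $F_X(D)=\frac1n\sum_{i=1}^nf_{x_i}(D)$. $(t)_+=\max\{t,0\}$; $\log$ is the natural logarithm. For $0<p<1$, $\|\cdot\|_p$ is the $\ell_p$ quasi-norm. *)

theory Defs
  imports "HOL-Probability.Probability"
begin

definition lp_norm :: "real \<Rightarrow> real ^ 'd \<Rightarrow> real" where
  "lp_norm p v = (\<Sum>i\<in>UNIV. \<bar>v $ i\<bar> powr p) powr (1 / p)"

definition gpen :: "real \<Rightarrow> real \<Rightarrow> real \<Rightarrow> real ^ 'd \<Rightarrow> real" where
  "gpen p q lam \<alpha> = (lp_norm p ((1 / lam) *\<^sub>R \<alpha>)) powr q"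

definition fx :: "real \<Rightarrow> real \<Rightarrow> real \<Rightarrow> real ^ 'm \<Rightarrow> real ^ 'd ^ 'm \<Rightarrow> real" where
  "fx p q lam x D = (INF \<alpha>. (1/2) * (norm (x - D *v \<alpha>))^2 + gpen p q lam \<alpha>)"

definition FX :: "real \<Rightarrow> real \<Rightarrow> real \<Rightarrow> nat \<Rightarrow> (nat \<Rightarrow> real ^ 'm) \<Rightarrow> real ^ 'd ^ 'm \<Rightarrow> real" where
  "FX p q lam n X D = (1 / real n) * (\<Sum>i<n. fx p q lam (X i) D)"

definition unit_col_dicts :: "(real ^ 'd ^ 'm) set" where
  "unit_col_dicts = {D. \<forall>j. norm (column j D) = 1}"

definition beta_const :: "nat \<Rightarrow> nat \<Rightarrow> real \<Rightarrow> real" where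
  "beta_const m d L = real m * real d / 8 * max (ln (6 * sqrt 8 * L)) 1"

definition eta :: "nat \<Rightarrow> nat \<Rightarrow> nat \<Rightarrow> real \<Rightarrow> real \<Rightarrow> real" where
  "eta n m d L t = 2 * sqrt (beta_const m d L * ln (real n) / real n)
                   + sqrt ((beta_const m d L + t / sqrt 8) / real n)"

end

theory Submission imports Defs begin


lemma gpen_nonneg: "gpen p q lam a \<ge> 0"
  by (simp add: gpen_def)

lemma gpen_zero: "gpen p q lam 0 = 0"
  by (simp add: gpen_def lp_norm_def)

lemma fx_bdd: "bdd_below ((\<lambda>\<alpha>. (1/2) * (norm (x - D *v \<alpha>))^2 + gpen p q lam \<alpha>) ` UNIV)"
  by (rule bdd_belowI[of _ 0]) (auto intro: add_nonneg_nonneg gpen_nonneg)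

lemma fx_nonneg: "fx p q lam x D \<ge> 0"
  unfolding fx_def by (rule cINF_greatest) (auto intro: add_nonneg_nonneg gpen_nonneg)

lemma fx_le_obj: "fx p q lam x D \<le> (1/2) * (norm (x - D *v \<alpha>))^2 + gpen p q lam \<alpha>"
  unfolding fx_def by (rule cINF_lower[OF fx_bdd]) simp

lemma fx_le: "fx p q lam x D \<le> (1/2) * (norm x)^2"
  using fx_le_obj[of p q lam x D 0] by (simp add: gpen_zero)

lemma fx_le_half: "norm x \<le> 1 \<Longrightarrow> fx p q lam x D \<le> 1/2"
proof -
  assume "norm x \<le> 1"
  then have "(norm x)^2 \<le> 1" by (simp add: power_le_one)
  then show ?thesis using fx_le[of p q lam x D] by linarith
qed

lemma alpha_bound:
  fixes \<alpha> :: "real ^ 'd"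
  assumes p: "p > 0" and q: "q > 0" and lam: "lam > 0" and g: "gpen p q lam \<alpha> \<le> 1/2"
  shows "\<bar>\<alpha> $ j\<bar> \<le> lam * (1/2) powr (1/q)"
proof -
  define v where "v = (1 / lam) *\<^sub>R \<alpha>"
  define y where "y = lp_norm p v"
  have y0: "y \<ge> 0" by (simp add: y_def lp_norm_def)
  have "y powr q \<le> 1/2" using g by (simp add: gpen_def y_def v_def)
  then have "(y powr q) powr (1/q) \<le> (1/2) powr (1/q)"
    by (intro powr_mono2) (use q in auto)
  then have yb: "y \<le> (1/2) powr (1/q)"
    using q y0 by (simp add: powr_powr powr_one)
  have "\<bar>v $ j\<bar> powr p \<le> (\<Sum>i\<in>UNIV. \<bar>v $ i\<bar> powr p)"
    by (rule member_le_sum) auto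
  then have "(\<bar>v $ j\<bar> powr p) powr (1/p) \<le> (\<Sum>i\<in>UNIV. \<bar>v $ i\<bar> powr p) powr (1/p)"
    by (intro powr_mono2) (use p in auto)
  then have "\<bar>v $ j\<bar> \<le> y"
    using p by (simp add: powr_powr powr_one y_def lp_norm_def)
  with yb have "\<bar>v $ j\<bar> \<le> (1/2) powr (1/q)" by linarith
  then have "\<bar>\<alpha> $ j\<bar> / lam \<le> (1/2) powr (1/q)"
    using lam by (simp add: v_def abs_mult)
  then show ?thesis using lam by (simp add: field_simps)
qed

lemma matvec_diff_bound:
  fixes E :: "real ^ 'd ^ 'm" and \<alpha> :: "real ^ 'd"
  assumes E: "\<And>i j. \<bar>E $ i $ j\<bar> \<le> h" and a: "\<And>j. \<bar>\<alpha> $ j\<bar> \<le> L"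
  shows "norm (E *v \<alpha>) \<le> real CARD('m) * real CARD('d) * h * L"
proof -
  have "norm (E *v \<alpha>) \<le> (\<Sum>i\<in>UNIV. \<bar>(E *v \<alpha>) $ i\<bar>)" by (rule norm_le_l1_cart)
  also have "\<dots> \<le> (\<Sum>i\<in>(UNIV::'m set). real CARD('d) * (h * L))"
  proof (rule sum_mono)
    fix i :: 'm
    have "\<bar>(E *v \<alpha>) $ i\<bar> = \<bar>\<Sum>j\<in>UNIV. E $ i $ j * \<alpha> $ j\<bar>"
      by (simp add: matrix_vector_mult_def)
    also have "\<dots> \<le> (\<Sum>j\<in>UNIV. \<bar>E $ i $ j * \<alpha> $ j\<bar>)" by (rule sum_abs)
    also have "\<dots> \<le> (\<Sum>j\<in>(UNIV::'d set). h * L)"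
      by (intro sum_mono) (auto simp: abs_mult intro: mult_mono E a order_trans[OF abs_ge_zero E])
    finally show "\<bar>(E *v \<alpha>) $ i\<bar> \<le> real CARD('d) * (h * L)" by simp
  qed
  finally show ?thesis by (simp add: mult_ac)
qed


lemma fx_lip:
  fixes D D0 :: "real ^ 'd ^ 'm" and x :: "real ^ 'm"
  assumes p: "p > 0" and q: "q > 0" and lam: "lam > 0"
    and L: "lam * (1/2) powr (1/q) \<le> L"
    and x: "norm x \<le> 1" and h: "h \<ge> 0"
    and E: "\<And>i j. \<bar>D $ i $ j - D0 $ i $ j\<bar> \<le> h"
  defines "w \<equiv> real CARD('m) * real CARD('d) * h * L"
  shows "fx p q lam x D0 \<le> fx p q lam x D + (w + w^2/2)"
proof -
  have L0: "L \<ge> 0" using L lam by (smt (verit) powr_ge_zero zero_le_mult_iff)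
  have w0: "w \<ge> 0" using L0 h by (simp add: w_def)
  have "fx p q lam x D0 - (w + w^2/2) \<le> fx p q lam x D"
    unfolding fx_def[of p q lam x D]
  proof (rule cINF_greatest)
    fix \<alpha> :: "real ^ 'd"
    let ?o = "(1/2) * (norm (x - D *v \<alpha>))^2 + gpen p q lam \<alpha>"
    show "fx p q lam x D0 - (w + w^2/2) \<le> ?o"
    proof (cases "?o \<le> 1/2")
      case False
      have "w^2 \<ge> 0" by simp
      then show ?thesis using fx_le_half[OF x, of p q lam D0] w0 False by linarith
    next
      case True
      have "(norm (x - D *v \<alpha>))^2 \<ge> 0" by simp
      then have g: "gpen p q lam \<alpha> \<le> 1/2" using True by linarith
      have ab: "\<bar>\<alpha> $ j\<bar> \<le> L" for j using alpha_bound[OF p q lam g, of j] L by linarith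
      have nd: "norm ((D - D0) *v \<alpha>) \<le> w"
        unfolding w_def by (rule matvec_diff_bound) (use E ab in auto)
      define r where "r = norm (x - D *v \<alpha>)"
      have r0: "r \<ge> 0" by (simp add: r_def)
      have "r^2 \<le> 1" using True gpen_nonneg[of p q lam \<alpha>] by (simp add: r_def)
      then have r1: "r \<le> 1" using r0 by (simp add: power_le_one_iff)
      have "x - D0 *v \<alpha> = (x - D *v \<alpha>) + (D - D0) *v \<alpha>"
        by (simp add: matrix_vector_mult_diff_rdistrib)
      then have "norm (x - D0 *v \<alpha>) = norm ((x - D *v \<alpha>) + (D - D0) *v \<alpha>)" by (simp only:)
      then have "norm (x - D0 *v \<alpha>) \<le> r + w"
        using nd norm_triangle_ineq[of "x - D *v \<alpha>" "(D - D0) *v \<alpha>"] unfolding r_def by linarith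
      then have "(norm (x - D0 *v \<alpha>))^2 \<le> (r + w)^2"
        by (intro power_mono) auto
      also have "\<dots> = r^2 + 2*r*w + w^2" by (simp add: power2_eq_square algebra_simps)
      also have "\<dots> \<le> r^2 + 2*w + w^2" using mult_right_mono[OF r1 w0] by linarith
      finally have "(1/2) * (norm (x - D0 *v \<alpha>))^2 + gpen p q lam \<alpha> \<le> ?o + (w + w^2/2)"
        by (simp add: r_def)
      then show ?thesis using fx_le_obj[of p q lam x D0 \<alpha>] by linarith
    qed
  qed simp
  then show ?thesis by linarith
qed


lemma fx_less_iff: "fx p q lam x D < c \<longleftrightarrow> (\<exists>\<alpha>. (1/2) * (norm (x - D *v \<alpha>))^2 + gpen p q lam \<alpha> < c)"
proof -
  have "(INF \<alpha>\<in>UNIV. (1/2) * (norm (x - D *v \<alpha>))^2 + gpen p q lam \<alpha>) < c \<longleftrightarrow>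
        (\<exists>\<alpha>\<in>UNIV. (1/2) * (norm (x - D *v \<alpha>))^2 + gpen p q lam \<alpha> < c)"
    by (rule cINF_less_iff[OF _ fx_bdd]) simp
  then show ?thesis unfolding fx_def by simp
qed

lemma fx_measurable:
  "(\<lambda>x. fx p q lam x D) \<in> borel_measurable (borel :: (real ^ 'm) measure)"
  for D :: "real ^ 'd ^ 'm"
proof (subst borel_measurable_iff_less, intro allI)
  fix c :: real
  have eq: "{w \<in> space borel. fx p q lam w D < c} =
     (\<Union>\<alpha>. {w. (1/2) * (norm (w - D *v \<alpha>))^2 + gpen p q lam \<alpha> < c})"
    by (auto simp only: fx_less_iff space_borel UNIV_I mem_Collect_eq UN_iff simp_thms)
  have "open {w. (1/2) * (norm (w - D *v \<alpha>))^2 + gpen p q lam \<alpha> < c}" for \<alpha>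
    by (intro open_Collect_less continuous_intros)
  then show "{w \<in> space borel. fx p q lam w D < c} \<in> sets borel"
    unfolding eq by (intro borel_open open_UN) auto
qed



lemma hoeff_prod:
  fixes P :: "'a measure" and f :: "'a \<Rightarrow> real"
  assumes P: "prob_space P" and n: "n \<ge> 1"
    and fm: "f \<in> borel_measurable P"
    and fb: "\<And>x. x \<in> space P \<Longrightarrow> f x \<in> {0..1/2}"
    and s: "s \<ge> 0"
  shows "measure (Pi\<^sub>M {..<n} (\<lambda>_. P))
           {\<omega> \<in> space (Pi\<^sub>M {..<n} (\<lambda>_. P)). \<bar>(\<Sum>i\<in>{..<n}. f (\<omega> i)) / real n - (\<integral>x. f x \<partial>P)\<bar> \<ge> s}
         \<le> 2 * exp (- 2 * real n * s^2 / (1/2 - 0)^2)"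
proof -
  define M where "M = Pi\<^sub>M {..<n} (\<lambda>_. P)"
  define I where "I = {..<n::nat}"
  interpret M: prob_space M unfolding M_def by (rule prob_space_PiM) (use P in auto)
  have I0: "I \<noteq> {}" using n by (auto simp: I_def lessThan_empty_iff)
  have comp: "distr M P (\<lambda>\<omega>. \<omega> i) = P" if "i \<in> I" for i
    unfolding M_def I_def by (rule distr_PiM_component) (use P that I_def in auto)
  have rv: "(\<lambda>\<omega>. \<omega> i) \<in> measurable M P" if "i \<in> I" for i
    using that by (simp add: M_def I_def measurable_component_singleton)
  have "distr M (Pi\<^sub>M I (\<lambda>_. P)) (\<lambda>\<omega>. \<lambda>i\<in>I. \<omega> i) = distr M M (\<lambda>\<omega>. \<omega>)"
    by (rule distr_cong) (auto simp: M_def I_def space_PiM)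
  also have "\<dots> = M" by simp
  also have "\<dots> = Pi\<^sub>M I (\<lambda>i. distr M P (\<lambda>\<omega>. \<omega> i))"
    unfolding M_def by (rule PiM_cong) (auto simp: comp[unfolded M_def] I_def)
  finally have ind0: "M.indep_vars (\<lambda>_. P) (\<lambda>i \<omega>. \<omega> i) I"
    by (subst M.indep_vars_iff_distr_eq_PiM'[OF I0 rv]) (auto simp: M_def)
  have ind: "M.indep_vars (\<lambda>_. borel) (\<lambda>i \<omega>. f (\<omega> i)) I"
    by (rule M.indep_vars_compose2[OF ind0]) (use fm in auto)
  have rvf: "(\<lambda>\<omega>. f (\<omega> i)) \<in> borel_measurable M" if "i \<in> I" for i
    using measurable_comp[OF rv[OF that] fm] by (simp add: comp_def)
  have distrf: "distr M borel (\<lambda>\<omega>. f (\<omega> i)) = distr P borel f" if "i \<in> I" for i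
  proof -
    have "distr P borel f = distr (distr M P (\<lambda>\<omega>. \<omega> i)) borel f" using comp[OF that] by simp
    also have "\<dots> = distr M borel (f \<circ> (\<lambda>\<omega>. \<omega> i))" by (rule distr_distr[OF fm rv[OF that]])
    finally show ?thesis by (simp add: comp_def)
  qed
  have "0 \<in> I" using n by (auto simp: I_def)
  interpret H: Hoeffding_ineq_iid M I "\<lambda>i \<omega>. f (\<omega> i)" "\<lambda>\<omega>. f (\<omega> 0)" 0 "1/2"
    "M.expectation (\<lambda>\<omega>. f (\<omega> 0))"
  proof unfold_locales
    show "finite I" by (simp add: I_def)
    show "M.indep_vars (\<lambda>_. borel) (\<lambda>i \<omega>. f (\<omega> i)) I" by (rule ind)
    show "distr M borel (\<lambda>\<omega>. f (\<omega> i)) = distr M borel (\<lambda>\<omega>. f (\<omega> 0))" if "i \<in> I" for i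
      using distrf[OF that] distrf[OF \<open>0 \<in> I\<close>] by simp
    show "(\<lambda>\<omega>. f (\<omega> 0)) \<in> borel_measurable M" by (rule rvf[OF \<open>0 \<in> I\<close>])
    show "AE \<omega> in M. f (\<omega> 0) \<in> {0..1/2}"
    proof (rule AE_I2)
      fix \<omega> assume "\<omega> \<in> space M"
      then have "\<omega> 0 \<in> space P" using \<open>0 \<in> I\<close> by (auto simp: M_def I_def space_PiM)
      then show "f (\<omega> 0) \<in> {0..1/2}" by (rule fb)
    qed
  qed simp
  have E: "M.expectation (\<lambda>\<omega>. f (\<omega> 0)) = (\<integral>x. f x \<partial>P)"
  proof -
    have "(\<integral>x. f x \<partial>P) = (\<integral>x. f x \<partial>(distr M P (\<lambda>\<omega>. \<omega> 0)))" using comp[OF \<open>0 \<in> I\<close>] by simp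
    also have "\<dots> = M.expectation (\<lambda>\<omega>. f (\<omega> 0))" by (rule integral_distr[OF rv[OF \<open>0 \<in> I\<close>] fm])
    finally show ?thesis by simp
  qed
  have "card I = n" by (simp add: I_def)
  have "M.prob {\<omega> \<in> space M. \<bar>(\<Sum>i\<in>I. f (\<omega> i)) / real (card I) - M.expectation (\<lambda>\<omega>. f (\<omega> 0))\<bar> \<ge> s}
        \<le> 2 * exp (- 2 * real (card I) * s^2 / (1/2 - 0)^2)"
    by (rule H.Hoeffding_ineq_abs_ge'[OF s]) (use I0 in auto)
  then show ?thesis using \<open>card I = n\<close> E by (simp add: M_def I_def)
qed



lemma vecset_card:
  fixes S :: "'a set"
  assumes "finite S"
  shows "finite {v :: 'a ^ 'n. \<forall>j. v $ j \<in> S} \<and> card {v :: 'a ^ 'n. \<forall>j. v $ j \<in> S} \<le> card S ^ CARD('n)"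
proof -
  have eq: "{v :: 'a ^ 'n. \<forall>j. v $ j \<in> S} = (\<lambda>F. \<chi> j. F j) ` (PiE UNIV (\<lambda>_. S))"
  proof (intro set_eqI iffI)
    fix v :: "'a ^ 'n" assume "v \<in> {v. \<forall>j. v $ j \<in> S}"
    then have "(\<lambda>j. v $ j) \<in> PiE UNIV (\<lambda>_. S)" by auto
    moreover have "v = (\<chi> j. (\<lambda>j. v $ j) j)" by simp
    ultimately show "v \<in> (\<lambda>F. \<chi> j. F j) ` (PiE UNIV (\<lambda>_. S))" by blast
  qed auto
  have fin: "finite (PiE (UNIV :: 'n set) (\<lambda>_. S))" using assms by (simp add: finite_PiE)
  have "card ((\<lambda>F. \<chi> j. F j) ` (PiE (UNIV :: 'n set) (\<lambda>_. S))) \<le> card (PiE (UNIV :: 'n set) (\<lambda>_. S))"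
    by (rule card_image_le[OF fin])
  also have "\<dots> = card S ^ CARD('n)" by (simp add: card_PiE)
  finally show ?thesis using fin eq by simp
qed

lemma matset_card:
  fixes S :: "'a set"
  assumes "finite S"
  shows "finite {D :: 'a ^ 'd ^ 'm. \<forall>i j. D $ i $ j \<in> S} \<and>
         card {D :: 'a ^ 'd ^ 'm. \<forall>i j. D $ i $ j \<in> S} \<le> card S ^ (CARD('m) * CARD('d))"
proof -
  define V where "V = {v :: 'a ^ 'd. \<forall>j. v $ j \<in> S}"
  have V: "finite V" "card V \<le> card S ^ CARD('d)" using vecset_card[OF assms] by (auto simp: V_def)
  have eq: "{D :: 'a ^ 'd ^ 'm. \<forall>i j. D $ i $ j \<in> S} = {D. \<forall>i. D $ i \<in> V}" by (auto simp: V_def)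
  have "card {D :: 'a ^ 'd ^ 'm. \<forall>i. D $ i \<in> V} \<le> card V ^ CARD('m)" using vecset_card[OF V(1)] by blast
  also have "\<dots> \<le> (card S ^ CARD('d)) ^ CARD('m)" by (rule power_mono[OF V(2)]) simp
  finally show ?thesis using vecset_card[OF V(1), where 'n='m] eq by (simp add: power_mult[symmetric] mult.commute)
qed

definition grid :: "real \<Rightarrow> real set" where
  "grid h = (\<lambda>j. -1 + real j * h) ` {0..nat \<lceil>2/h\<rceil>}"

lemma grid_finite: "finite (grid h)" by (simp add: grid_def)

lemma grid_card: "h > 0 \<Longrightarrow> real (card (grid h)) \<le> 2/h + 2"
proof -
  assume h: "h > 0"
  have "card (grid h) \<le> card {0..nat \<lceil>2/h\<rceil>}" unfolding grid_def by (rule card_image_le) simp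
  then have "real (card (grid h)) \<le> real (nat \<lceil>2/h\<rceil>) + 1" by simp
  also have "real (nat \<lceil>2/h\<rceil>) = real_of_int \<lceil>2/h\<rceil>" using h by simp
  also have "real_of_int \<lceil>2/h\<rceil> \<le> 2/h + 1" by linarith
  finally show ?thesis by simp
qed

lemma grid_approx:
  assumes h: "h > 0" and y: "\<bar>y\<bar> \<le> 1"
  shows "\<exists>z\<in>grid h. \<bar>y - z\<bar> \<le> h"
proof -
  define j where "j = nat \<lfloor>(y+1)/h\<rfloor>"
  have y1: "(y+1)/h \<ge> 0" using y h by simp
  have jr: "real j = of_int \<lfloor>(y+1)/h\<rfloor>" using y1 by (simp add: j_def)
  have "real j \<le> (y+1)/h" "(y+1)/h < real j + 1" using jr by linarith+
  then have a: "real j * h \<le> y + 1" "y + 1 < real j * h + h" using h by (simp_all add: field_simps)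
  have "(y+1)/h \<le> 2/h" using y h by (simp add: divide_right_mono)
  then have "j \<le> nat \<lceil>2/h\<rceil>" unfolding j_def by (intro nat_mono) linarith
  then have "-1 + real j * h \<in> grid h" by (auto simp: grid_def)
  moreover have "\<bar>y - (-1 + real j * h)\<bar> \<le> h" using a by simp
  ultimately show ?thesis by blast
qed



lemma ln2_half: "ln (2::real) \<ge> 1/2"
proof -
  have "exp (-1/2::real) \<ge> 1/2" using exp_ge_add_one_self[of "-1/2::real"] by simp
  then have "exp (1/2::real) \<le> 2"
    using exp_minus[of "1/2::real"] by (simp add: field_simps)
  then show ?thesis by (subst ln_ge_iff) auto
qed

lemma e_ge: "exp (1::real) \<ge> 5/2"
  using exp_lower_Taylor_quadratic[of "1::real"] by simp

lemma sqrt8_ge: "sqrt 8 \<ge> (2.8::real)"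
  by (rule real_le_rsqrt) (simp add: power2_eq_square)

lemma numeric_key:
  fixes nn k Mx L t :: real
  assumes nn: "nn \<ge> 2" and k: "k \<ge> 1" and Mx: "Mx \<ge> 1" and hML: "ln (6 * sqrt 8 * L) \<le> Mx"
    and L: "L > 0" and t: "t \<ge> 1/2" and k2: "k < 2 * nn"
  defines "a \<equiv> k * Mx"
  defines "R \<equiv> 2 * sqrt (a * ln nn) + sqrt (a + sqrt 8 * t)"
  shows "k * ln (14 * k * L * sqrt (8 * nn) + 2) + t \<le> (R - 1/3)^2"
proof -
  define l where "l = ln nn"
  have "ln 2 \<le> l" using nn by (simp add: l_def)
  then have l: "l \<ge> 1/2" using ln2_half by linarith
  have eM: "exp Mx \<ge> 5/2" using e_ge Mx by (smt (verit) exp_le_cancel_iff)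
  have LM: "6 * sqrt 8 * L \<le> exp Mx" using hML L by (smt (verit) exp_le_cancel_iff exp_ln real_sqrt_gt_zero mult_pos_pos)
  have sn: "sqrt nn \<ge> 1.4" using nn by (intro real_le_rsqrt) (simp add: power2_eq_square)
  have skn: "k * sqrt nn \<ge> 1.4" using mult_mono[OF k sn] k by simp
  define G where "G = 14 * k * L * sqrt (8 * nn) + 2"
  have "14 * k * L * sqrt (8 * nn) = (7/3) * (6 * sqrt 8 * L) * (k * sqrt nn)"
    by (simp add: real_sqrt_mult)
  also have "\<dots> \<le> (7/3) * exp Mx * (k * sqrt nn)"
    using LM skn by (intro mult_right_mono mult_left_mono) auto
  finally have G1: "G \<le> (7/3) * exp Mx * (k * sqrt nn) + 2" by (simp add: G_def)
  have "2 \<le> (2/3) * exp Mx * (k * sqrt nn)"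
  proof -
    have "(2/3) * (5/2) * 1.4 \<le> (2/3) * exp Mx * (k * sqrt nn)"
      using eM skn by (intro mult_mono) auto
    then show ?thesis by linarith
  qed
  with G1 have G2': "G \<le> 3 * (exp Mx * (k * sqrt nn))" by linarith
  then have G2: "G \<le> 3 * exp Mx * k * sqrt nn" by (simp only: mult_ac)
  have "14 * k * L * sqrt (8 * nn) \<ge> 0" using k L nn by simp
  then have G0: "G > 0" unfolding G_def by linarith
  have "ln G \<le> ln (3 * exp Mx * k * sqrt nn)"
    using G2 G0 k nn by (subst ln_le_cancel_iff) auto
  also have "\<dots> = ln 3 + Mx + ln k + ln (sqrt nn)"
    using k nn by (simp add: ln_mult)
  also have "ln (sqrt nn) = l / 2" using nn by (simp add: ln_sqrt l_def)
  also have "ln k \<le> ln 2 + l"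
  proof -
    have "ln k \<le> ln (2 * nn)" using k k2 by simp
    also have "\<dots> = ln 2 + l" using nn by (simp add: l_def ln_mult)
    finally show ?thesis .
  qed
  finally have lnG: "ln G \<le> ln 3 + ln 2 + Mx + 3/2 * l" by simp
  have "ln 3 + ln (2::real) = ln (3 * 2)" by (rule ln_mult_pos[symmetric]) auto
  also have "(3 * 2 :: real) = 6" by simp
  also have "ln (6::real) \<le> 2"
  proof -
    have "exp (2::real) = exp 1 * exp 1" by (simp add: exp_add[symmetric])
    also have "\<dots> \<ge> 5/2 * (5/2)" using e_ge by (intro mult_mono) auto
    finally have "6 \<le> exp (2::real)" by simp
    then have "ln 6 \<le> ln (exp (2::real))" by (subst ln_le_cancel_iff) auto
    then show ?thesis by simp
  qed
  finally have lnG2: "ln G \<le> Mx + 2 + 3/2 * l" using lnG by simp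
  have ka: "k \<le> a" using mult_left_mono[OF Mx] k unfolding a_def by simp
  have a1: "a \<ge> 1" using ka k by linarith
  have "k * ln G \<le> k * (Mx + 2 + 3/2 * l)" using lnG2 k by (intro mult_left_mono) auto
  also have "\<dots> = a + 2 * k + 3/2 * k * l" by (simp add: a_def algebra_simps)
  also have "\<dots> \<le> a + 2 * a + 3/2 * a * l" using mult_right_mono[OF ka, of l] ka l by linarith
  finally have LHS: "k * ln G + t \<le> 3 * a + 3/2 * a * l + t" by simp
  define u where "u = sqrt (a * l)"
  define v where "v = sqrt (a + sqrt 8 * t)"
  have t8: "sqrt 8 * t \<ge> 0" using t by simp
  have v1: "v \<ge> sqrt a" using t8 by (simp add: v_def)
  have sa: "sqrt a \<ge> 1" using a1 by simp
  have u0: "u \<ge> 0" using a1 l by (simp add: u_def)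
  have uu: "u^2 = a * l" using a1 l by (simp add: u_def)
  have vv: "v^2 = a + sqrt 8 * t" using a1 t8 by (simp add: v_def)
  have usa: "u * sqrt a = a * sqrt l" using a1 l by (simp add: u_def real_sqrt_mult)
  have Rdef: "R = 2 * u + v" by (simp add: R_def u_def v_def l_def)
  have e1: "(R - 1/3)^2 \<ge> R^2 - 2/3 * R" by (simp add: power2_eq_square algebra_simps)
  have e2: "R^2 = 4 * (a * l) + 4 * (u * v) + (a + sqrt 8 * t)"
  proof -
    have "R^2 = 4 * u^2 + 4 * (u * v) + v^2" by (simp add: Rdef power2_eq_square algebra_simps)
    then show ?thesis using uu vv by simp
  qed
  have e3: "4 * (u * v) - 4/3 * u \<ge> 8/3 * (a * sqrt l)"
  proof -
    have "4 * v - 4/3 \<ge> 8/3 * sqrt a" using v1 sa by linarith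
    from mult_left_mono[OF this u0] have "u * (4 * v - 4/3) \<ge> u * (8/3 * sqrt a)" .
    then show ?thesis using usa by (simp add: algebra_simps)
  qed
  have e4: "2/3 * v \<le> 1/3 * ((a + sqrt 8 * t) + 1)"
    using sum_squares_ge_zero[of "v - 1" 0] vv by (simp add: power2_eq_square algebra_simps)
  have RR: "(R - 1/3)^2 \<ge> 4 * (a * l) + 8/3 * (a * sqrt l) + 2/3 * (a + sqrt 8 * t) - 1/3"
  proof -
    have e5: "2/3 * R = 4/3 * u + 2/3 * v" by (simp add: Rdef)
    have lin: "\<And>x P R A B C S u v::real. P - 2/3 * R \<le> x \<Longrightarrow> P = 4 * A + 4 * B + S \<Longrightarrow>
       8/3 * C \<le> 4 * B - 4/3 * u \<Longrightarrow> 2/3 * v \<le> 1/3 * (S + 1) \<Longrightarrow> 2/3 * R = 4/3 * u + 2/3 * v \<Longrightarrow>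
       4 * A + 8/3 * C + 2/3 * S - 1/3 \<le> x" by argo
    show ?thesis by (rule lin[OF e1 e2 e3 e4 e5])
  qed
  have sl: "sqrt l \<ge> 0.7" using l by (intro real_le_rsqrt) (simp add: power2_eq_square)
  have "a * (5/2 * l + 8/3 * sqrt l - 7/3) \<ge> 0"
  proof -
    have "5/2 * l + 8/3 * sqrt l - 7/3 \<ge> 0" using l sl by linarith
    then show ?thesis using a1 by simp
  qed
  moreover have "(2/3 * sqrt 8 - 1) * t \<ge> 1/3"
  proof -
    have c8: "2/3 * sqrt 8 - 1 \<ge> 0.8" using sqrt8_ge by linarith
    have "0.8 * (1/2) \<le> (2/3 * sqrt 8 - 1) * t" by (rule mult_mono[OF c8 t]) (use sqrt8_ge t in auto)
    then show ?thesis by linarith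
  qed
  ultimately have "3 * a + 3/2 * a * l + t \<le> 4 * a * l + 8/3 * a * sqrt l + 2/3 * (a + sqrt 8 * t) - 1/3"
    by (simp add: algebra_simps)
  with LHS RR show ?thesis by (simp add: G_def)
qed


theorem theorem1:
  fixes P :: "(real ^ 'm) measure"
    and n :: nat and p q lam t L :: real
  assumes "n \<ge> 1" and "p > 0" and "q > 0" and "lam > 0"
    and "prob_space P" and "sets P = sets borel"
    and "measure P {x \<in> space P. norm x \<le> 1} = 1"
    and "0 \<le> t"
    and "L > lam * real CARD('d) powr (max (1 - 1 / p) 0) * (1/2) powr (1 / q)"
  shows "\<exists>A \<in> sets (Pi\<^sub>M {..<n} (\<lambda>_. P)).
           A \<subseteq> {X \<in> space (Pi\<^sub>M {..<n} (\<lambda>_. P)).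
                  \<forall>D \<in> (unit_col_dicts :: (real ^ 'd ^ 'm) set).
                    \<bar>FX p q lam n X D - (\<integral>x. fx p q lam x D \<partial>P)\<bar>
                      \<le> eta n CARD('m) CARD('d) L t}
         \<and> measure (Pi\<^sub>M {..<n} (\<lambda>_. P)) A \<ge> 1 - 2 * exp (- t)"
proof -
  note n1 = assms(1) and p = assms(2) and q = assms(3) and lam = assms(4)
    and PP = assms(5) and sP = assms(6) and mP = assms(7) and t0 = assms(8) and hL = assms(9)
  define M where "M = Pi\<^sub>M {..<n} (\<lambda>_. P)"
  define et where "et = eta n CARD('m) CARD('d) L t"
  define Good where "Good = {X \<in> space M. \<forall>D \<in> (unit_col_dicts :: (real ^ 'd ^ 'm) set).
                    \<bar>FX p q lam n X D - (\<integral>x. fx p q lam x D \<partial>P)\<bar> \<le> et}"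
  interpret PS: prob_space P by (rule PP)
  interpret M: prob_space M unfolding M_def by (rule prob_space_PiM) (use PP in auto)
  have spP: "space P = UNIV" using sets_eq_imp_space_eq[OF sP] by simp
  have fxm: "(\<lambda>x. fx p q lam x D) \<in> borel_measurable P" for D :: "real ^ 'd ^ 'm"
    by (subst measurable_cong_sets[OF sP refl]) (rule fx_measurable)
  have ball_sets: "{x \<in> space P. norm x \<le> 1} \<in> sets P"
  proof -
    have "{x \<in> space P. norm x \<le> 1} = cball (0 :: real ^ 'm) 1" by (auto simp: spP)
    then show ?thesis using sP by simp
  qed
  have AEP: "AE x in P. norm x \<le> 1"
    using PS.prob_eq_1[OF ball_sets] mP by (auto elim: AE_mp)
  have LL: "lam * (1/2) powr (1/q) \<le> L"
  proof -
    have "real CARD('d) powr (max (1 - 1 / p) 0) \<ge> 1" by (rule ge_one_powr_ge_zero) auto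
    then have "lam * (1/2) powr (1/q) * 1 \<le> lam * (1/2) powr (1/q) * real CARD('d) powr (max (1 - 1 / p) 0)"
      using lam by (intro mult_left_mono) auto
    then show ?thesis using hL by (simp add: mult_ac)
  qed
  have "lam * (1/2) powr (1/q) > 0" using lam by simp
  with LL have L0: "L > 0" by linarith
  have int_bounds: "0 \<le> (\<integral>x. fx p q lam x D \<partial>P) \<and> (\<integral>x. fx p q lam x D \<partial>P) \<le> 1/2" for D :: "real ^ 'd ^ 'm"
  proof
    show "0 \<le> (\<integral>x. fx p q lam x D \<partial>P)" by (rule integral_nonneg_AE) (simp add: fx_nonneg)
    show "(\<integral>x. fx p q lam x D \<partial>P) \<le> 1/2"
    proof (cases "integrable P (\<lambda>x. fx p q lam x D)")
      case True
      have "(\<integral>x. fx p q lam x D \<partial>P) \<le> (\<integral>x. 1/2 \<partial>P)"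
      proof (rule integral_mono_AE[OF True])
        show "AE x in P. fx p q lam x D \<le> 1/2" using AEP by eventually_elim (rule fx_le_half)
      qed simp
      then show ?thesis using PS.prob_space by simp
    next
      case False then show ?thesis by (simp add: not_integrable_integral_eq)
    qed
  qed
  define E1 where "E1 = {\<omega> \<in> space M. \<forall>i<n. norm (\<omega> i) \<le> (1::real)}"
  have E1s: "E1 \<in> sets M"
  proof -
    have "E1 = (\<Inter>i<n. {\<omega> \<in> space M. \<omega> i \<in> {x \<in> space P. norm x \<le> 1}}) \<inter> space M"
      by (auto simp: E1_def spP)
    also have "\<dots> \<in> sets M"
      unfolding M_def using ball_sets n1 by (intro sets.Int sets.countable_INT' sets.top measurable_sets) (auto simp: lessThan_empty_iff)
    finally show ?thesis .
  qed
  have AEM: "AE \<omega> in M. \<forall>i\<in>{..<n}. norm (\<omega> i) \<le> (1::real)"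
  proof (rule eventually_ball_finite, simp, intro ballI)
    fix i assume "i \<in> {..<n}"
    then show "AE \<omega> in M. norm (\<omega> i) \<le> (1::real)"
      unfolding M_def using AE_PiM_component[of "{..<n}" "\<lambda>_. P" i "\<lambda>x. norm x \<le> 1"] AEP PP by auto
  qed
  have mE1: "measure M E1 = 1"
    using M.prob_eq_1[OF E1s] AEM by (auto simp: E1_def elim!: AE_mp)
  have FX_bounds: "0 \<le> FX p q lam n X D \<and> FX p q lam n X D \<le> 1/2" if "X \<in> E1" for X and D :: "real ^ 'd ^ 'm"
  proof -
    have b: "0 \<le> fx p q lam (X i) D \<and> fx p q lam (X i) D \<le> 1/2" if "i < n" for i
    proof -
      have "norm (X i) \<le> 1" using \<open>X \<in> E1\<close> that by (auto simp: E1_def)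
      then show ?thesis using fx_nonneg[of p q lam "X i" D] fx_le_half[of "X i" p q lam D] by simp
    qed
    have "(\<Sum>i<n. fx p q lam (X i) D) \<le> (\<Sum>i<n. 1/2)" by (rule sum_mono) (use b in auto)
    moreover have "0 \<le> (\<Sum>i<n. fx p q lam (X i) D)" by (rule sum_nonneg) (use b in auto)
    ultimately show ?thesis using n1 by (auto simp: FX_def field_simps)
  qed
  have goal_eq: "?thesis \<longleftrightarrow> (\<exists>A \<in> sets M. A \<subseteq> Good \<and> measure M A \<ge> 1 - 2 * exp (- t))"
    by (simp add: M_def Good_def et_def)
  show ?thesis
  proof (cases "1 - 2 * exp (- t) \<le> 0")
    case True
    then show ?thesis unfolding goal_eq by (intro bexI[of _ "{}"]) auto
  next
    case tbig: False
    show ?thesis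
    proof (cases "et \<ge> 1/2")
      case True
      have "E1 \<subseteq> Good"
      proof
        fix X assume X: "X \<in> E1"
        show "X \<in> Good" unfolding Good_def
        proof (intro CollectI conjI ballI)
          show "X \<in> space M" using X by (simp add: E1_def)
          fix D :: "real ^ 'd ^ 'm"
          show "\<bar>FX p q lam n X D - (\<integral>x. fx p q lam x D \<partial>P)\<bar> \<le> et"
            using FX_bounds[OF X, of D] int_bounds[of D] True by linarith
        qed
      qed
      then show ?thesis unfolding goal_eq using E1s mE1 by (intro bexI[of _ E1]) auto
    next
      case etsmall: False
      define m where "m = CARD('m)"
      define d where "d = CARD('d)"
      define k where "k = real m * real d"
      define Mx where "Mx = max (ln (6 * sqrt 8 * L)) 1"
      define a where "a = k * Mx"
      have m1: "m \<ge> 1" unfolding m_def using finite_UNIV_card_ge_0[where 'a='m] by simp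
      have d1: "d \<ge> 1" unfolding d_def using finite_UNIV_card_ge_0[where 'a='d] by simp
      have k1: "k \<ge> 1" using mult_mono[of 1 "real m" 1 "real d"] m1 d1 by (simp add: k_def)
      have Mx1: "Mx \<ge> 1" and hML: "ln (6 * sqrt 8 * L) \<le> Mx" by (simp_all add: Mx_def)
      have ka: "k \<le> a" using mult_left_mono[OF Mx1] k1 unfolding a_def by simp
      have a1: "a \<ge> 1" using ka k1 by linarith
      have etdef: "et = 2 * sqrt (a/8 * ln (real n) / real n) + sqrt ((a/8 + t / sqrt 8) / real n)"
        by (simp add: et_def eta_def beta_const_def a_def k_def Mx_def m_def d_def mult_ac)
      have "exp (- t) < 1/2" using tbig by simp
      then have "ln (exp (- t)) < ln (1/2)" by (subst ln_less_cancel_iff) auto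
      then have "t > ln 2" by (simp add: ln_div)
      then have th: "t \<ge> 1/2" using ln2_half by linarith
      have "sqrt ((a/8 + t / sqrt 8) / real n) < 1/2"
      proof -
        have "0 \<le> 2 * sqrt (a/8 * ln (real n) / real n)" using n1 a1 by simp
        then show ?thesis using etsmall etdef by linarith
      qed
      moreover have X0: "(a/8 + t / sqrt 8) / real n \<ge> 0" using n1 a1 t0 by simp
      ultimately have "(sqrt ((a/8 + t / sqrt 8) / real n))^2 < (1/2)^2"
        by (intro power_strict_mono) auto
      then have "(a/8 + t / sqrt 8) / real n < (1/2)^2" using X0 by simp
      then have hA: "a/8 + t / sqrt 8 < real n / 4" using n1 by (simp add: field_simps)
      have s83: "sqrt 8 \<le> (3::real)" by (rule real_sqrt_le_iff[THEN iffD2, of 8 9, simplified]) 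
      have "t / sqrt 8 \<ge> t / 3" using th s83 by (intro divide_left_mono) auto
      then have "real n > 1" using hA a1 th by linarith
      then have n2: "n \<ge> 2" by simp
      have "t / sqrt 8 \<ge> 0" using t0 by simp
      then have kn: "k < 2 * real n" using hA ka by linarith
      define c where "c = sqrt (8 * real n)"
      have c4: "c \<ge> 4" unfolding c_def using n2 by (intro real_le_rsqrt) simp
      define R where "R = 2 * sqrt (a * ln (real n)) + sqrt (a + sqrt 8 * t)"
      have ln0: "ln (real n) \<ge> 0" using n1 by simp
      have cet: "c * et = R"
      proof -
        have e1: "c * sqrt (a/8 * ln (real n) / real n) = sqrt (a * ln (real n))"
          unfolding c_def using n1 by (simp add: real_sqrt_mult[symmetric] field_simps)
        have "8 / sqrt 8 = sqrt (8::real)" by (simp add: real_div_sqrt)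
        then have e2: "c * sqrt ((a/8 + t / sqrt 8) / real n) = sqrt (a + sqrt 8 * t)"
          unfolding c_def using n1 by (simp add: real_sqrt_mult[symmetric] field_simps)
        show ?thesis using e1 e2 by (simp add: etdef R_def algebra_simps)
      qed
      have key: "k * ln (14 * k * L * c + 2) + t \<le> (R - 1/3)^2"
        using numeric_key[of "real n" k Mx L t, OF _ k1 Mx1 hML L0 th] n2 kn
        by (simp add: c_def R_def a_def)
      have R1: "R \<ge> 1"
      proof -
        have "sqrt 8 * t \<ge> 0" using t0 by simp
        then have "sqrt (a + sqrt 8 * t) \<ge> 1" using a1 by simp
        moreover have "sqrt (a * ln (real n)) \<ge> 0" using a1 ln0 by simp
        ultimately show ?thesis unfolding R_def by linarith
      qed
      define h where "h = 1 / (7 * k * L * c)"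
      have h0: "h > 0" using k1 L0 c4 by (simp add: h_def)
      define w where "w = k * h * L"
      have wc: "w = 1 / (7 * c)" using k1 L0 c4 by (simp add: w_def h_def field_simps)
      define \<rho> where "\<rho> = w + w^2/2"
      have rho0: "\<rho> \<ge> 0" using wc c4 by (simp add: \<rho>_def)
      have rho: "2 * \<rho> \<le> 1 / (3 * c)"
      proof -
        have "2 * \<rho> = 2 / (7 * c) + 1 / (49 * c^2)" by (simp add: \<rho>_def wc power2_eq_square field_simps)
        also have "1 / (49 * c^2) \<le> 1 / (196 * c)" using c4 by (simp add: power2_eq_square field_simps)
        finally show ?thesis using c4 by (simp add: field_simps)
      qed
      define s where "s = et - 2 * \<rho>"
      have "et = R / c" using cet c4 by (simp add: field_simps)
      then have sR: "c * s \<ge> R - 1/3" using rho c4 by (simp add: s_def field_simps)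
      have "c * s \<ge> 0" using sR R1 by linarith
      then have s0: "s \<ge> 0" using c4 by (simp add: zero_le_mult_iff)
      have s8: "8 * real n * s^2 \<ge> (R - 1/3)^2"
      proof -
        have "(R - 1/3)^2 \<le> (c * s)^2" using sR R1 by (intro power_mono) auto
        also have "(c * s)^2 = 8 * real n * s^2" by (simp add: c_def power_mult_distrib)
        finally show ?thesis .
      qed
      define G where "G = 14 * k * L * c + 2"
      have "14 * k * L * c \<ge> 0" using k1 L0 c4 by simp
      then have G0: "G > 0" unfolding G_def by linarith
      have cardgrid: "real (card (grid h)) \<le> G"
        using grid_card[OF h0] k1 L0 c4 by (simp add: G_def h_def field_simps)
      define net where "net = {D :: real ^ 'd ^ 'm. \<forall>i j. D $ i $ j \<in> grid h}"
      have netfin: "finite net" and netcard: "card net \<le> card (grid h) ^ (m * d)"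
        using matset_card[OF grid_finite, of h, where 'd='d and 'm='m] by (simp_all add: net_def m_def d_def)
      have cardnet: "real (card net) \<le> exp (k * ln G)"
      proof -
        have "real (card net) \<le> real (card (grid h) ^ (m * d))" using netcard by linarith
        also have "\<dots> = real (card (grid h)) ^ (m * d)" by simp
        also have "\<dots> \<le> G ^ (m * d)" by (rule power_mono[OF cardgrid]) simp
        also have "\<dots> = exp (ln G) ^ (m * d)" using G0 by simp
        also have "\<dots> = exp (real (m * d) * ln G)" by (rule exp_of_nat_mult[symmetric])
        also have "\<dots> = exp (k * ln G)" by (simp add: k_def)
        finally show ?thesis .
      qed
      define h0 where "h0 D x = (if norm x \<le> 1 then fx p q lam x D else 0)"
        for D :: "real ^ 'd ^ 'm" and x :: "real ^ 'm"
      have h0mb: "h0 D \<in> borel_measurable borel" for D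
      proof -
        note fx_measurable[measurable]
        show ?thesis unfolding h0_def[abs_def] by measurable
      qed
      have h0m: "h0 D \<in> borel_measurable P" for D
        by (subst measurable_cong_sets[OF sP refl]) (rule h0mb)
      have h0b: "h0 D x \<in> {0..1/2}" for D x
        using fx_nonneg[of p q lam x D] fx_le_half[of x p q lam D] by (auto simp: h0_def)
      have h0int: "integrable P (h0 D)" for D
        by (rule PS.integrable_const_bound[where B="1/2"]) (use h0b h0m in auto)
      have h0eq: "(\<integral>x. fx p q lam x D \<partial>P) = (\<integral>x. h0 D x \<partial>P)" for D
        by (rule integral_cong_AE[OF fxm h0m]) (use AEP in \<open>auto simp: h0_def elim!: AE_mp\<close>)
      have closeInt: "(\<integral>x. h0 D x \<partial>P) \<le> (\<integral>x. h0 D0 x \<partial>P) + \<rho>"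
        if cl: "\<And>x. norm x \<le> 1 \<Longrightarrow> fx p q lam x D \<le> fx p q lam x D0 + \<rho>" for D D0
      proof -
        have "(\<integral>x. h0 D x \<partial>P) \<le> (\<integral>x. h0 D0 x + \<rho> \<partial>P)"
        proof (rule integral_mono[OF h0int])
          show "integrable P (\<lambda>x. h0 D0 x + \<rho>)" using h0int[of D0] by simp
          show "h0 D x \<le> h0 D0 x + \<rho>" for x using cl[of x] rho0 by (auto simp: h0_def)
        qed
        also have "\<dots> = (\<integral>x. h0 D0 x \<partial>P) + \<rho>"
          using h0int PS.prob_space by (simp add: integral_add)
        finally show ?thesis .
      qed
      define avg where "avg D \<omega> = (\<Sum>i\<in>{..<n}. h0 D (\<omega> i)) / real n" for D \<omega>
      define Bad where "Bad D = {\<omega> \<in> space M. s \<le> \<bar>avg D \<omega> - (\<integral>x. h0 D x \<partial>P)\<bar>}" for D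
      have avgm: "avg D \<in> borel_measurable M" for D
      proof -
        have "(\<lambda>\<omega>. h0 D (\<omega> i)) \<in> borel_measurable M" if "i \<in> {..<n}" for i
          using measurable_compose[OF measurable_component_singleton[OF that] h0m[of D]]
          unfolding M_def by simp
        then have "(\<lambda>\<omega>. \<Sum>i\<in>{..<n}. h0 D (\<omega> i)) \<in> borel_measurable M"
          by (rule borel_measurable_sum)
        then show ?thesis unfolding avg_def[abs_def] by simp
      qed
      have Bads: "Bad D \<in> sets M" for D
      proof -
        have "(\<lambda>\<omega>. \<bar>avg D \<omega> - (\<integral>x. h0 D x \<partial>P)\<bar>) \<in> borel_measurable M" using avgm[of D] by simp
        then show ?thesis unfolding Bad_def by measurable
      qed
      have Badp: "measure M (Bad D) \<le> 2 * exp (- (8 * real n * s^2))" for D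
      proof -
        have "measure M (Bad D) \<le> 2 * exp (- 2 * real n * s^2 / (1/2 - 0)^2)"
          unfolding M_def Bad_def avg_def by (rule hoeff_prod[OF PP n1 h0m h0b s0])
        then show ?thesis by (simp add: power2_eq_square mult.assoc)
      qed
      define U where "U = (\<Union>D\<in>net. Bad D)"
      have Us: "U \<in> sets M" unfolding U_def using netfin Bads by auto
      have mU: "measure M U \<le> 2 * exp (- t)"
      proof -
        have "measure M U \<le> (\<Sum>D\<in>net. measure M (Bad D))"
          unfolding U_def by (rule M.finite_measure_subadditive_finite[OF netfin]) (use Bads in auto)
        also have "\<dots> \<le> (\<Sum>D\<in>net. 2 * exp (- (8 * real n * s^2)))" by (rule sum_mono[OF Badp])
        also have "\<dots> = real (card net) * (2 * exp (- (8 * real n * s^2)))" by simp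
        also have "\<dots> \<le> exp (k * ln G) * (2 * exp (- (8 * real n * s^2)))"
          by (rule mult_right_mono[OF cardnet]) simp
        also have "\<dots> = 2 * exp (k * ln G - 8 * real n * s^2)" by (simp add: exp_diff exp_minus field_simps)
        also have "\<dots> \<le> 2 * exp (- t)" using key s8 by (simp add: G_def)
        finally show ?thesis .
      qed
      define A where "A = E1 - U"
      have As: "A \<in> sets M" unfolding A_def using E1s Us by auto
      have mA: "measure M A \<ge> 1 - 2 * exp (- t)"
      proof -
        have "measure M A = measure M E1 - measure M (E1 \<inter> U)"
          unfolding A_def by (rule M.finite_measure_Diff'[OF E1s Us])
        moreover have "measure M (E1 \<inter> U) \<le> measure M U" by (rule M.finite_measure_mono) (use Us in auto)
        ultimately show ?thesis using mE1 mU by linarith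
      qed
      have AG: "A \<subseteq> Good"
      proof
        fix X assume XA: "X \<in> A"
        then have XE: "X \<in> E1" and XU: "X \<notin> U" by (auto simp: A_def)
        have Xn: "norm (X i) \<le> 1" if "i < n" for i using XE that by (auto simp: E1_def)
        show "X \<in> Good" unfolding Good_def
        proof (intro CollectI conjI ballI)
          show "X \<in> space M" using XE by (simp add: E1_def)
          fix D :: "real ^ 'd ^ 'm" assume D: "D \<in> unit_col_dicts"
          have Db: "\<bar>D $ i $ j\<bar> \<le> 1" for i j
          proof -
            have "\<bar>column j D $ i\<bar> \<le> norm (column j D)" by (rule component_le_norm_cart)
            then show ?thesis using D by (simp add: unit_col_dicts_def column_def)
          qed
          define D0 where "D0 = (\<chi> i j. SOME z. z \<in> grid h \<and> \<bar>D $ i $ j - z\<bar> \<le> h)"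
          have D0p: "D0 $ i $ j \<in> grid h \<and> \<bar>D $ i $ j - D0 $ i $ j\<bar> \<le> h" for i j
          proof -
            have "\<exists>z. z \<in> grid h \<and> \<bar>D $ i $ j - z\<bar> \<le> h" using grid_approx[OF h0 Db[of i j]] by blast
            from someI_ex[OF this] show ?thesis unfolding D0_def by simp
          qed
          have D0net: "D0 \<in> net" using D0p by (simp add: net_def)
          have l1: "fx p q lam x D0 \<le> fx p q lam x D + \<rho>" if "norm x \<le> 1" for x
            using fx_lip[OF p q lam LL that less_imp_le[OF h0], of D D0] D0p
            by (simp add: \<rho>_def w_def k_def m_def d_def)
          have l2: "fx p q lam x D \<le> fx p q lam x D0 + \<rho>" if "norm x \<le> 1" for x
            using fx_lip[OF p q lam LL that less_imp_le[OF h0], of D0 D] D0p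
            by (simp add: \<rho>_def w_def k_def m_def d_def abs_minus_commute)
          have nb: "X \<notin> Bad D0" using XU D0net by (auto simp: U_def)
          then have c1: "\<bar>avg D0 X - (\<integral>x. h0 D0 x \<partial>P)\<bar> < s"
            using \<open>X \<in> space M\<close> by (auto simp: Bad_def)
          have c2: "\<bar>FX p q lam n X D - avg D0 X\<bar> \<le> \<rho>"
          proof -
            have "FX p q lam n X D - avg D0 X = (\<Sum>i<n. fx p q lam (X i) D - fx p q lam (X i) D0) / real n"
              by (simp add: FX_def avg_def h0_def Xn sum_subtractf diff_divide_distrib)
            moreover have "\<bar>\<Sum>i<n. fx p q lam (X i) D - fx p q lam (X i) D0\<bar> \<le> real n * \<rho>"
            proof -
              have "\<bar>\<Sum>i<n. fx p q lam (X i) D - fx p q lam (X i) D0\<bar>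
                    \<le> (\<Sum>i<n. \<bar>fx p q lam (X i) D - fx p q lam (X i) D0\<bar>)" by (rule sum_abs)
              also have "\<dots> \<le> (\<Sum>i<n. \<rho>)"
              proof (rule sum_mono)
                fix i assume "i \<in> {..<n}"
                then have "norm (X i) \<le> 1" using Xn by simp
                from l1[OF this] l2[OF this]
                show "\<bar>fx p q lam (X i) D - fx p q lam (X i) D0\<bar> \<le> \<rho>" by linarith
              qed
              finally show ?thesis by simp
            qed
            moreover have "real n > 0" using n1 by simp
            ultimately show ?thesis by (simp add: pos_divide_le_eq mult.commute)
          qed
          have c3: "\<bar>(\<integral>x. fx p q lam x D \<partial>P) - (\<integral>x. h0 D0 x \<partial>P)\<bar> \<le> \<rho>"
          proof -
            have i1: "(\<integral>x. h0 D x \<partial>P) \<le> (\<integral>x. h0 D0 x \<partial>P) + \<rho>" by (rule closeInt[OF l2])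
            have i2: "(\<integral>x. h0 D0 x \<partial>P) \<le> (\<integral>x. h0 D x \<partial>P) + \<rho>" by (rule closeInt[OF l1])
            show ?thesis unfolding h0eq[of D] using i1 i2 by linarith
          qed
          show "\<bar>FX p q lam n X D - (\<integral>x. fx p q lam x D \<partial>P)\<bar> \<le> et"
            using c1 c2 c3 unfolding s_def by linarith
        qed
      qed
      show ?thesis unfolding goal_eq using As AG mA by blast
    qed
  qed
qed

end
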